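(* For $r, p_{1}, p_{2}\in \mathbb N$, \begin{align*} \sum_{n=1}^\infty \frac{r H_n^{(p_{1})} H_n^{(p_{2})}}{n(n+r)} &=S_{p_{1},p_{2}+1}^{+,+}+S_{p_{2},p_{1}+1}^{+,+}-\zeta(p_{1}+p_{2}+1) +\sum_{b=1}^{r-1}S(p_{1},p_{2},1,b,0)\\ &\quad +\sum_{b=1}^{r-1}S(p_{2},p_{1},1,b,0) -\sum_{b=1}^{r-1}S(0,p_{1}+p_{2}+1,1,b,0)\,. \end{align*}
   Context: $H_n^{(q)}=\sum_{j=1}^n j^{-q}$ for $q\in\mathbb N$, and $H_n^{(0)}:=n$. For $q\in\mathbb Z_{\ge0}$... more precisely for $q\in\{0\}\cup\mathbb N$ and $m,t,b\in\mathbb N$, $S(q,m,t,b,0):=\sum_{n=1}^\infty\frac{H_n^{(q)}}{n^{m}(n+b)^{t}}$ (so $S(0,m,1,b,0)=\sum_{n\ge1}\frac{1}{n^{m-1}(n+b)}$). $S_{p,q}^{+,+}:=\sum_{n=1}^\infty H_n^{(p)}/n^q$. $\zeta$ is the Riemann zeta function. Empty sums are $0$. *)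

theory Defs
  imports "HOL-Analysis.Analysis"
begin

text \<open>Generalized harmonic numbers; by convention H n 0 = n.\<close>
definition harm :: "nat \<Rightarrow> nat \<Rightarrow> real" where
  "harm q n = (if q = 0 then real n else (\<Sum>j=1..n. 1 / (real j) ^ q))"

text \<open>S(q,m,t,b,0) = sum over n>=1 of H_n^(q) / (n^m (n+b)^t).\<close>
definition S5 :: "nat \<Rightarrow> nat \<Rightarrow> nat \<Rightarrow> nat \<Rightarrow> real" where
  "S5 q m t b = (\<Sum>n. harm q (Suc n) / ((real (Suc n)) ^ m * (real (Suc n) + real b) ^ t))"

definition Spp :: "nat \<Rightarrow> nat \<Rightarrow> real" where
  "Spp p q = (\<Sum>n. harm p (Suc n) / (real (Suc n)) ^ q)"

text \<open>Riemann zeta at integer arguments (used only for s >= 2, where the series converges).\<close>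
definition zeta_nat :: "nat \<Rightarrow> real" where
  "zeta_nat s = (\<Sum>n. 1 / (real (Suc n)) ^ s)"

end

theory Submission
  imports Defs "HOL-Real_Asymp.Real_Asymp"
begin

lemma harm1_eq: "harm 1 n = (Harmonic_Numbers.harm n :: real)"
  by (simp add: harm_def Harmonic_Numbers.harm_def divide_inverse)

lemma harm_nonneg': "harm p n \<ge> 0"
  by (auto simp: harm_def intro!: sum_nonneg)

lemma harm_zero: "p \<ge> 1 \<Longrightarrow> harm p 0 = 0"
  by (simp add: harm_def)

lemma harm_Suc': "p \<ge> 1 \<Longrightarrow> harm p (Suc k) = harm p k + 1 / real (Suc k) ^ p"
  by (simp add: harm_def)

lemma harm_le1: "p \<ge> 1 \<Longrightarrow> harm p n \<le> harm 1 n"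
proof -
  assume p: "p \<ge> 1"
  have "(\<Sum>j=1..n. 1 / real j ^ p) \<le> (\<Sum>j=1..n. 1 / real j ^ 1)"
  proof (intro sum_mono)
    fix j assume "j \<in> {1..n}"
    then have "real j \<ge> 1" by auto
    then have "real j \<le> real j ^ p" using p by (simp add: self_le_power)
    then show "1 / real j ^ p \<le> 1 / real j ^ 1" using \<open>real j \<ge> 1\<close>
      by (simp add: frac_le)
  qed
  then show ?thesis using p unfolding harm_def by simp
qed

lemma harm_ln0: "p \<ge> 1 \<Longrightarrow> harm p (Suc k) \<le> ln (real (Suc k)) + 1"
proof -
  assume p: "p \<ge> 1"
  have "(Harmonic_Numbers.harm (Suc k) - ln (real (Suc k)) :: real)
      \<le> Harmonic_Numbers.harm (Suc 0) - ln (real (Suc 0))"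
    using decseq_harm_diff_ln unfolding decseq_def by blast
  then have "(Harmonic_Numbers.harm (Suc k) :: real) \<le> ln (real (Suc k)) + 1"
    by (simp add: Harmonic_Numbers.harm_def)
  then show ?thesis using harm_le1[OF p, of "Suc k"] harm1_eq[of "Suc k"] by linarith
qed

lemma harm_ln: "p \<ge> 1 \<Longrightarrow> harm p n \<le> ln (real n + 1) + 1"
proof -
  assume p: "p \<ge> 1"
  show ?thesis
  proof (cases n)
    case 0 then show ?thesis using harm_zero[OF p] by simp
  next
    case (Suc k)
    have "ln (real (Suc k)) \<le> ln (real n + 1)" using Suc by simp
    then show ?thesis using harm_ln0[OF p, of k] unfolding Suc by linarith
  qed
qed

lemma harm_sqrt: "p \<ge> 1 \<Longrightarrow> harm p (Suc n) \<le> 3 * sqrt (real (Suc n))"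
proof -
  assume p: "p \<ge> 1"
  define x where "x = real (Suc n)"
  have x1: "x \<ge> 1" by (simp add: x_def)
  have s1: "sqrt x \<ge> 1" using x1 by simp
  have "ln x = 2 * ln (sqrt x)" using x1 by (simp add: ln_sqrt)
  also have "\<dots> \<le> 2 * (sqrt x - 1)" using ln_le_minus_one[of "sqrt x"] s1 by simp
  finally have "ln x \<le> 2 * sqrt x - 2" by simp
  moreover have "harm p (Suc n) \<le> ln x + 1" using harm_ln0[OF p, of n]
    by (simp add: x_def)
  ultimately have "harm p (Suc n) \<le> 3 * sqrt x" using s1 by linarith
  then show ?thesis by (simp add: x_def)
qed

lemma summ_gen:
  fixes g :: "nat \<Rightarrow> real"
  assumes g: "\<And>m. 0 \<le> g m" "\<And>m. g m \<le> 3 * sqrt (real (Suc m))" and q: "q \<ge> 1"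
  shows "summable (\<lambda>m. g m / real (Suc m) ^ q / (real m + 1 + real b))"
proof -
  have s0: "summable (\<lambda>n. real n powr (-3/2))"
    by (subst summable_real_powr_iff) auto
  have s1: "summable (\<lambda>m. 3 * real (Suc m) powr (-3/2))"
    using s0 by (subst summable_Suc_iff) (intro summable_mult)
  show ?thesis
  proof (rule summable_comparison_test[OF _ s1], intro exI allI impI)
    fix m :: nat
    define x where "x = real (Suc m)"
    have x1: "x \<ge> 1" by (simp add: x_def)
    have "x ^ 2 \<le> x ^ q * (real m + 1 + real b)"
    proof -
      have "x \<le> x ^ q" using x1 q by (simp add: self_le_power)
      moreover have "x \<le> real m + 1 + real b" by (simp add: x_def)
      ultimately show ?thesis using x1 by (simp add: power2_eq_square mult_mono)
    qed
    have "norm (g m / real (Suc m) ^ q / (real m + 1 + real b))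
        = g m / (x ^ q * (real m + 1 + real b))" using g(1)[of m] by (simp add: x_def)
    also have "\<dots> \<le> 3 * sqrt x / x ^ 2"
    proof (rule frac_le)
      show "0 \<le> 3 * sqrt x" using x1 by simp
      show "g m \<le> 3 * sqrt x" using g(2)[of m] by (simp add: x_def)
      show "0 < x ^ 2" using x1 by simp
    qed fact
    also have "\<dots> = 3 * x powr (-3/2)"
    proof -
      have "sqrt x / x ^ 2 = x powr (1/2) / x powr 2"
        using x1 by (simp add: powr_half_sqrt powr_realpow)
      also have "\<dots> = x powr (1/2 - 2)" by (rule powr_diff[symmetric])
      also have "(1/2 - 2 :: real) = -3/2" by simp
      finally show ?thesis by simp
    qed
    finally show "norm (g m / real (Suc m) ^ q / (real m + 1 + real b))
        \<le> 3 * real (Suc m) powr (-3/2)" by (simp add: x_def)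
  qed
qed

lemma lim_zero:
  assumes "p1 \<ge> 1" "p2 \<ge> 1"
  shows "(\<lambda>N. harm p1 N * harm p2 N / (real N + 1 + real b)) \<longlonglongrightarrow> 0"
proof (rule tendsto_sandwich[of "\<lambda>_. 0" _ _ "\<lambda>N. (ln (real N + 1) + 1)^2 / (real N + 1)"])
  show "\<forall>\<^sub>F N in sequentially. 0 \<le> harm p1 N * harm p2 N / (real N + 1 + real b)"
    by (intro always_eventually allI divide_nonneg_pos mult_nonneg_nonneg harm_nonneg') auto
  show "\<forall>\<^sub>F N in sequentially. harm p1 N * harm p2 N / (real N + 1 + real b)
      \<le> (ln (real N + 1) + 1)^2 / (real N + 1)"
  proof (intro always_eventually allI frac_le)
    fix N
    show "harm p1 N * harm p2 N \<le> (ln (real N + 1) + 1)^2"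
      unfolding power2_eq_square
      by (intro mult_mono harm_ln assms harm_nonneg') auto
  qed (auto intro: mult_nonneg_nonneg harm_nonneg')
  show "(\<lambda>N. (ln (real N + 1) + 1)^2 / (real N + 1)) \<longlonglongrightarrow> 0" by real_asymp
qed simp

lemma tele:
  fixes f d :: "nat \<Rightarrow> real"
  assumes f0: "f 0 = 0" and d: "\<And>k. d k = f (Suc k) - f k"
  shows "(\<Sum>m<N. f (Suc m) * (1 / (real m + 1 + real b) - 1 / (real m + 2 + real b)))
       = (\<Sum>m<N. d m / (real m + 1 + real b)) - f N / (real N + 1 + real b)"
proof (induction N)
  case 0 then show ?case using f0 by simp
next
  case (Suc N)
  have e: "d N / (real N + 1 + real b) + f N / (real N + 1 + real b)
      = f (Suc N) / (real N + 1 + real b)"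
    using d[of N] by (simp add: add_divide_distrib[symmetric])
  show ?case using Suc e
    by (simp add: algebra_simps add_divide_distrib diff_divide_distrib)
qed

lemma fin_tele:
  fixes x :: real assumes "x > 0"
  shows "(\<Sum>b<r. 1 / (x + real b) - 1 / (x + real b + 1)) = real r / (x * (x + real r))"
proof -
  have "(\<Sum>b<r. 1 / (x + real b) - 1 / (x + real b + 1))
      = (\<Sum>b<r. (\<lambda>b. 1 / (x + real b)) b - (\<lambda>b. 1 / (x + real b)) (Suc b))"
    by (simp add: algebra_simps)
  also have "\<dots> = 1 / x - 1 / (x + real r)" by (subst sum_lessThan_telescope') simp
  also have "\<dots> = real r / (x * (x + real r))" using assms by (simp add: field_simps)
  finally show ?thesis .
qed

theorem lemma7:
  fixes r p1 p2 :: nat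
  assumes "r \<ge> 1" and "p1 \<ge> 1" and "p2 \<ge> 1"
  shows "(\<Sum>n. real r * harm p1 (Suc n) * harm p2 (Suc n)
              / (real (Suc n) * (real (Suc n) + real r)))
       = Spp p1 (p2 + 1) + Spp p2 (p1 + 1) - zeta_nat (p1 + p2 + 1)
         + (\<Sum>b=1..r-1. S5 p1 p2 1 b)
         + (\<Sum>b=1..r-1. S5 p2 p1 1 b)
         - (\<Sum>b=1..r-1. S5 0 (p1 + p2 + 1) 1 b)"
proof -
  note p1 = assms(2) and p2 = assms(3)
  define f where "f k = harm p1 k * harm p2 k" for k
  define d where "d k = f (Suc k) - f k" for k
  define A where "A q p b = (\<lambda>m. harm p (Suc m) / real (Suc m) ^ q / (real m + 1 + real b))"
    for q p and b :: nat
  define C where "C b = (\<lambda>m. 1 / real (Suc m) ^ (p1 + p2) / (real m + 1 + real b))" for b :: nat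
  have f0: "f 0 = 0" using harm_zero[OF p1] by (simp add: f_def)
  have sA1: "summable (A p2 p1 b)" for b unfolding A_def
    by (rule summ_gen) (use harm_sqrt[OF p1] harm_nonneg' p2 in auto)
  have sA2: "summable (A p1 p2 b)" for b unfolding A_def
    by (rule summ_gen) (use harm_sqrt[OF p2] harm_nonneg' p1 in auto)
  have sC: "summable (C b)" for b unfolding C_def
  proof (rule summ_gen[where g="\<lambda>_. 1"])
    fix m
    have "(1::real) \<le> sqrt (real (Suc m))" by simp
    then show "(1::real) \<le> 3 * sqrt (real (Suc m))" by linarith
  qed (use p1 in auto)
  have d_eq: "d m / (real m + 1 + real b) = A p2 p1 b m + A p1 p2 b m - C b m" for m b
  proof -
    define x where "x = real (Suc m)"
    have x0: "x > 0" by (simp add: x_def)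
    define a where "a = harm p1 m"
    define c where "c = harm p2 m"
    have "d m = (a + 1/x^p1) * (c + 1/x^p2) - a * c"
      by (simp add: d_def f_def harm_Suc'[OF p1] harm_Suc'[OF p2] a_def c_def x_def)
    also have "\<dots> = (a + 1/x^p1) / x^p2 + (c + 1/x^p2) / x^p1 - 1 / x^(p1+p2)"
      using x0 by (simp add: field_simps power_add)
    finally have "d m = harm p1 (Suc m) / x^p2 + harm p2 (Suc m) / x^p1 - 1 / x^(p1+p2)"
      by (simp add: harm_Suc'[OF p1] harm_Suc'[OF p2] a_def c_def x_def)
    then show ?thesis unfolding A_def C_def x_def
      by (simp add: diff_divide_distrib add_divide_distrib)
  qed
  have T_sums: "(\<lambda>m. f (Suc m) * (1 / (real m + 1 + real b) - 1 / (real m + 2 + real b)))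
      sums (suminf (A p2 p1 b) + suminf (A p1 p2 b) - suminf (C b))" for b
  proof -
    have sd: "(\<lambda>m. d m / (real m + 1 + real b)) sums (suminf (A p2 p1 b) + suminf (A p1 p2 b) - suminf (C b))"
      unfolding d_eq by (intro sums_diff sums_add summable_sums sA1 sA2 sC)
    have "(\<lambda>N. (\<Sum>m<N. d m / (real m + 1 + real b)) - f N / (real N + 1 + real b))
        \<longlonglongrightarrow> (suminf (A p2 p1 b) + suminf (A p1 p2 b) - suminf (C b)) - 0"
      using sd lim_zero[OF p1 p2, of b] unfolding sums_def f_def by (intro tendsto_diff)
    then show ?thesis unfolding sums_def using tele[of f d, OF f0 d_def] by simp
  qed
  have lhs_eq: "real r * harm p1 (Suc n) * harm p2 (Suc n) / (real (Suc n) * (real (Suc n) + real r))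
      = (\<Sum>b<r. f (Suc n) * (1 / (real n + 1 + real b) - 1 / (real n + 2 + real b)))" for n
  proof -
    have "(\<Sum>b<r. f (Suc n) * (1 / (real n + 1 + real b) - 1 / (real n + 2 + real b)))
        = f (Suc n) * (\<Sum>b<r. 1 / (real (Suc n) + real b) - 1 / (real (Suc n) + real b + 1))"
      by (simp add: sum_distrib_left algebra_simps)
    also have "\<dots> = f (Suc n) * (real r / (real (Suc n) * (real (Suc n) + real r)))"
      by (subst fin_tele) auto
    finally show ?thesis by (simp add: f_def)
  qed
  have "(\<lambda>n. real r * harm p1 (Suc n) * harm p2 (Suc n) / (real (Suc n) * (real (Suc n) + real r)))
      sums (\<Sum>b<r. suminf (A p2 p1 b) + suminf (A p1 p2 b) - suminf (C b))"
    unfolding lhs_eq by (intro sums_sum T_sums)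
  then have L: "(\<Sum>n. real r * harm p1 (Suc n) * harm p2 (Suc n) / (real (Suc n) * (real (Suc n) + real r)))
      = (\<Sum>b<r. suminf (A p2 p1 b) + suminf (A p1 p2 b) - suminf (C b))"
    by (rule sums_unique[symmetric])
  have e1: "suminf (A p2 p1 b) = S5 p1 p2 1 b" for b
    unfolding A_def S5_def by (simp add: divide_divide_eq_left add_ac mult_ac)
  have e2: "suminf (A p1 p2 b) = S5 p2 p1 1 b" for b
    unfolding A_def S5_def by (simp add: divide_divide_eq_left add_ac mult_ac)
  have e3: "suminf (C b) = S5 0 (p1 + p2 + 1) 1 b" for b
  proof -
    have ceq: "C b m = harm 0 (Suc m) / (real (Suc m) ^ (p1 + p2 + 1) * (real (Suc m) + real b) ^ 1)" for m
    proof -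
      define x where "x = real (Suc m)"
      have x0: "x > 0" by (simp add: x_def)
      have "1 / x ^ (p1 + p2) / (x + real b) = x / (x ^ (p1 + p2 + 1) * (x + real b))"
      proof -
        have xb: "x + real b > 0" using x0 by simp
        have "x / (x ^ (p1 + p2 + 1) * (x + real b)) = (x / x) / (x ^ (p1 + p2) * (x + real b))"
          by (simp add: mult_ac)
        also have "\<dots> = 1 / x ^ (p1 + p2) / (x + real b)" using x0 by simp
        finally show ?thesis by simp
      qed
      then show ?thesis unfolding C_def harm_def x_def by (simp add: add_ac)
    qed
    show ?thesis unfolding S5_def by (rule arg_cong[where f=suminf]) (rule ext, rule ceq)
  qed
  have e10: "suminf (A p2 p1 0) = Spp p1 (p2 + 1)"
    unfolding A_def Spp_def by (simp add: divide_divide_eq_left add_ac mult_ac)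
  have e20: "suminf (A p1 p2 0) = Spp p2 (p1 + 1)"
    unfolding A_def Spp_def by (simp add: divide_divide_eq_left add_ac mult_ac)
  have e30: "suminf (C 0) = zeta_nat (p1 + p2 + 1)"
    unfolding C_def zeta_nat_def by (simp add: divide_divide_eq_left add_ac mult_ac)
  have z1: "S5 p1 p2 1 0 = Spp p1 (p2 + 1)" using e1[of 0] e10 by simp
  have z2: "S5 p2 p1 1 0 = Spp p2 (p1 + 1)" using e2[of 0] e20 by simp
  have z3: "S5 0 (p1 + p2 + 1) 1 0 = zeta_nat (p1 + p2 + 1)" using e3[of 0] e30 by simp
  have R: "{..<r} = insert 0 {1..r-1}" using assms(1) by auto
  show ?thesis unfolding L R
    using z1 z2 z3 by (simp add: sum.distrib sum_subtractf e1 e2 e3)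
qed

end
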